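(* Every non-isotropic vector $\alpha\in A_N$ (i.e. $q_N(\alpha)=1$) is represented by $(r+\rho(r))/2\bmod N$ for a suitable $r\in N$ with $r^2=-2$.
   Context: Lattices: $U$ has Gram matrix $\begin{pmatrix}0&1\\1&0\end{pmatrix}$; $D_4$ negative definite; $U(2)$ is $U$ with doubled form. $N=U\oplus U(2)\oplus D_4\oplus D_4$, $A_N=N^*/N\cong\mathbb F_2^6$, $q_N:A_N\to\mathbb Z/2\mathbb Z$, $q_N(x)=\langle x,x\rangle\bmod2\mathbb Z$ (values lie in $\mathbb Z/2\mathbb Z$). $\rho=\rho_1\oplus\rho_0\oplus\rho_0\in O(N)$, where for $D_4=\{x\in\mathbb Z^4:\sum x_i\equiv0\bmod 2\}$ (negative standard inner product) $\rho_0(x_1,x_2,x_3,x_4)=(x_2,-x_1,x_4,-x_3)$, and for standard hyperbolic bases $e,f$ of $U$, $e',f'$ of $U(2)$, $\rho_1(e)=-e-e'$, $\rho_1(f)=f-f'$, $\rho_1(e')=e'+2e$, $\rho_1(f')=2f-f'$. For $r\in N$, $r^2=-2$, one has $(r+\rho(r))/2\in N^*$. *)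

theory Defs
  imports Complex_Main
begin

text \<open>Ambient space: N \<otimes> Q, vectors v :: nat \<Rightarrow> rat supported on indices 0..11.
  Coordinates: 0,1 = coefficients of e,f (hyperbolic basis of U);
  2,3 = coefficients of e',f' (basis of U(2));
  4..7 = first D4 (inside Z^4), 8..11 = second D4.\<close>

definition amb :: "(nat \<Rightarrow> rat) set" where
  "amb = {v. \<forall>i\<ge>12. v i = 0}"

definition bil :: "(nat \<Rightarrow> rat) \<Rightarrow> (nat \<Rightarrow> rat) \<Rightarrow> rat" where
  "bil v w = v 0 * w 1 + v 1 * w 0 + 2 * (v 2 * w 3 + v 3 * w 2)
            - (\<Sum>i\<in>{4..<12}. v i * w i)"

definition latN :: "(nat \<Rightarrow> rat) set" where
  "latN = {v \<in> amb. (\<forall>i<12. v i \<in> \<int>)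
                 \<and> (\<Sum>i\<in>{4..<8}. v i) / 2 \<in> \<int>
                 \<and> (\<Sum>i\<in>{8..<12}. v i) / 2 \<in> \<int>}"

definition dualN :: "(nat \<Rightarrow> rat) set" where
  "dualN = {v \<in> amb. \<forall>w\<in>latN. bil v w \<in> \<int>}"

text \<open>The isometry rho = rho1 + rho0 + rho0 (extended Q-linearly), in coordinates:
  rho1(a e + b f + c e' + d f') = (2c - a) e + (b + 2d) f + (c - a) e' + (-b - d) f',
  rho0(x1,x2,x3,x4) = (x2,-x1,x4,-x3).\<close>
definition rho :: "(nat \<Rightarrow> rat) \<Rightarrow> (nat \<Rightarrow> rat)" where
  "rho v = (\<lambda>i.
     if i = 0 then - v 0 + 2 * v 2
     else if i = 1 then v 1 + 2 * v 3
     else if i = 2 then - v 0 + v 2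
     else if i = 3 then - v 1 - v 3
     else if i = 4 \<or> i = 6 \<or> i = 8 \<or> i = 10 then v (i + 1)
     else if i = 5 \<or> i = 7 \<or> i = 9 \<or> i = 11 then - v (i - 1)
     else 0)"

definition qN_is_one :: "(nat \<Rightarrow> rat) \<Rightarrow> bool" where
  "qN_is_one x \<longleftrightarrow> (bil x x - 1) / 2 \<in> \<int>"

end

theory Submission imports Defs begin
lemma s48: "(\<Sum>i\<in>{4..<8::nat}. f i) = f 4 + f 5 + f 6 + f 7"
proof - have "{4..<8::nat} = {4,5,6,7}" by auto thus ?thesis by (simp add: algebra_simps) qed
lemma s812: "(\<Sum>i\<in>{8..<12::nat}. f i) = f 8 + f 9 + f 10 + f 11"
proof - have "{8..<12::nat} = {8,9,10,11}" by auto thus ?thesis by (simp add: algebra_simps) qed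
lemma s412: "(\<Sum>i\<in>{4..<12::nat}. f i) = f 4 + f 5 + f 6 + f 7 + f 8 + f 9 + f 10 + f 11"
proof - have "{4..<12::nat} = {4,5,6,7,8,9,10,11}" by auto thus ?thesis by (simp add: algebra_simps) qed
lemma all12: "(\<forall>i<(12::nat). P i) = (P 0 \<and> P 1 \<and> P 2 \<and> P 3 \<and> P 4 \<and> P 5 \<and> P 6 \<and> P 7 \<and> P 8 \<and> P 9 \<and> P 10 \<and> P 11)"
proof -
  have e: "{..<12::nat} = {0,1,2,3,4,5,6,7,8,9,10,11}" by (simp add: lessThan_Suc eval_nat_numeral insert_commute)
  have "(\<forall>i<(12::nat). P i) = (\<forall>i\<in>{..<12}. P i)" by auto
  also have "\<dots> = (P 0 \<and> P 1 \<and> P 2 \<and> P 3 \<and> P 4 \<and> P 5 \<and> P 6 \<and> P 7 \<and> P 8 \<and> P 9 \<and> P 10 \<and> P 11)"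
    unfolding e by simp
  finally show ?thesis .
qed

lemma half_Ints: "((of_int m :: rat) / 2 \<in> \<int>) \<longleftrightarrow> even m"
proof
  assume "(of_int m :: rat) / 2 \<in> \<int>"
  then obtain n where "of_int m / 2 = (of_int n :: rat)" by (auto elim: Ints_cases)
  hence "(of_int m :: rat) = of_int (2*n)" by (simp add: field_simps)
  hence "m = 2*n" by (simp only: of_int_eq_iff)
  thus "even m" by simp
next
  assume "even m" then obtain n where "m = 2*n" by auto
  thus "(of_int m :: rat) / 2 \<in> \<int>" by simp
qed

lemma quarter_Ints: "((of_int m :: rat) / 4 \<in> \<int>) \<longleftrightarrow> 4 dvd m"
proof
  assume "(of_int m :: rat) / 4 \<in> \<int>"
  then obtain n where "of_int m / 4 = (of_int n :: rat)" by (auto elim: Ints_cases)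
  hence "(of_int m :: rat) = of_int (4*n)" by (simp add: field_simps)
  hence "m = 4*n" by (simp only: of_int_eq_iff)
  thus "4 dvd m" by simp
next
  assume "4 dvd m" then obtain n where "m = 4*n" by auto
  thus "(of_int m :: rat) / 4 \<in> \<int>" by simp
qed

lemma latN_half:
  fixes dd :: "nat \<Rightarrow> int"
  assumes "\<forall>i\<ge>12. dd i = 0" "\<forall>i<12. even (dd i)"
    "4 dvd (dd 4 + dd 5 + dd 6 + dd 7)" "4 dvd (dd 8 + dd 9 + dd 10 + dd 11)"
  shows "(\<lambda>i. (of_int (dd i) :: rat) / 2) \<in> latN"
proof -
  have a: "(of_int (dd 4) / 2 + of_int (dd 5) / 2 + of_int (dd 6) / 2 + of_int (dd 7) / 2) / 2
     = (of_int (dd 4 + dd 5 + dd 6 + dd 7) :: rat) / 4" by (simp add: field_simps)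
  have b: "(of_int (dd 8) / 2 + of_int (dd 9) / 2 + of_int (dd 10) / 2 + of_int (dd 11) / 2) / 2
     = (of_int (dd 8 + dd 9 + dd 10 + dd 11) :: rat) / 4" by (simp add: field_simps)
  show ?thesis unfolding latN_def amb_def s48 s812 
    using assms by (auto simp only: a b quarter_Ints half_Ints mem_Collect_eq)
qed

lemma latN_int:
  fixes v :: "nat \<Rightarrow> int"
  assumes "\<forall>i\<ge>12. v i = 0" "even (v 4 + v 5 + v 6 + v 7)" "even (v 8 + v 9 + v 10 + v 11)"
  shows "(\<lambda>i. (of_int (v i) :: rat)) \<in> latN"
proof -
  have a: "(of_int (v 4) + of_int (v 5) + of_int (v 6) + of_int (v 7)) / 2
     = (of_int (v 4 + v 5 + v 6 + v 7) :: rat) / 2" by simp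
  have b: "(of_int (v 8) + of_int (v 9) + of_int (v 10) + of_int (v 11)) / 2
     = (of_int (v 8 + v 9 + v 10 + v 11) :: rat) / 2" by simp
  have c: "(of_int (v 4) + of_int (v 5) + of_int (v 6) + of_int (v 7)) / 2 \<in> (\<int>::rat set)"
    unfolding a half_Ints using assms(2) .
  have d: "(of_int (v 8) + of_int (v 9) + of_int (v 10) + of_int (v 11)) / 2 \<in> (\<int>::rat set)"
    unfolding b half_Ints using assms(3) .
  show ?thesis unfolding latN_def amb_def s48 s812 
    using assms(1) c d by auto
qed

lemma bil_int: "bil (\<lambda>i. of_int (v i)) (\<lambda>i. of_int (w i)) =
   of_int (v 0 * w 1 + v 1 * w 0 + 2*(v 2*w 3 + v 3*w 2) - (\<Sum>i\<in>{4..<12}. v i * w i))"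
  unfolding bil_def by simp

lemma sq_even: "(k::int) = 2*m \<Longrightarrow> \<exists>t. k^2 = 8*t + 4*m"
proof -
  assume k: "k = 2*m"
  have "even (m*(m-1))" by simp
  then obtain t where t: "m*(m-1) = 2*t" by blast
  have "k^2 = 4*(m*(m-1)) + 4*m" unfolding k by (simp add: power2_eq_square algebra_simps)
  thus ?thesis unfolding t by (intro exI[of _ t]) simp
qed
lemma sq_odd: "(k::int) = 2*m+1 \<Longrightarrow> \<exists>t. k^2 = 8*t + 1"
proof -
  assume k: "k = 2*m+1"
  have "even (m*(m+1))" by simp
  then obtain t where t: "m*(m+1) = 2*t" by blast
  have "k^2 = 4*(m*(m+1)) + 1" unfolding k by (simp add: power2_eq_square algebra_simps)
  thus ?thesis unfolding t by (intro exI[of _ t]) simp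
qed
lemma d4_choice:
  fixes k1 k2 k3 k4 :: int
  assumes p: "even (k1 - k2)" "even (k1 - k3)" "even (k1 - k4)"
  obtains x1 x2 x3 x4 :: int and z :: bool and j :: int where
    "even (x1+x2-k1)" "even (x2-x1-k2)" "even (x3+x4-k3)" "even (x4-x3-k4)"
    "4 dvd ((x1+x2-k1) + (x2-x1-k2) + (x3+x4-k3) + (x4-x3-k4))"
    "even (x1+x2+x3+x4)"
    "x1^2+x2^2+x3^2+x4^2 = (if z then 0 else 2)"
    "k1^2+k2^2+k3^2+k4^2 = 8*j + (if z then 0 else 4)"
proof (cases "even k1")
  case True
  hence "even k2" "even k3" "even k4" using p by presburger+
  with True obtain m1 m2 m3 m4 where m: "k1 = 2*m1" "k2 = 2*m2" "k3 = 2*m3" "k4 = 2*m4"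
    by (metis evenE)
  obtain t1 t2 t3 t4 where t: "k1^2 = 8*t1 + 4*m1" "k2^2 = 8*t2 + 4*m2" "k3^2 = 8*t3 + 4*m3" "k4^2 = 8*t4 + 4*m4"
    using sq_even[OF m(1)] sq_even[OF m(2)] sq_even[OF m(3)] sq_even[OF m(4)] by blast
  show ?thesis
  proof (cases "even (m1+m2+m3+m4)")
    case True2: True
    then obtain s where s: "m1+m2+m3+m4 = 2*s" by blast
    have jj: "k1^2+k2^2+k3^2+k4^2 = 8*(t1+t2+t3+t4+s) + (if True then 0 else 4)" using t s by simp
    have f4: "4 dvd ((0+0-k1) + (0-0-k2) + (0+0-k3) + (0-0-k4))"
    proof -
      have "(0+0-k1) + (0-0-k2) + (0+0-k3) + (0-0-k4) = 4*(-s)" using m s by simp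
      thus ?thesis by (metis dvd_triv_left)
    qed
    show ?thesis using f4 that[of 0 0 0 0 True "t1+t2+t3+t4+s"] m jj by simp
  next
    case False2: False
    then obtain s where s: "m1+m2+m3+m4 = 2*s+1" by (metis oddE)
    have jj: "k1^2+k2^2+k3^2+k4^2 = 8*(t1+t2+t3+t4+s) + (if False then 0 else 4)" using t s by simp
    have f4: "4 dvd ((1+1-k1) + (1-1-k2) + (0+0-k3) + (0-0-k4))"
    proof -
      have "(1+1-k1) + (1-1-k2) + (0+0-k3) + (0-0-k4) = 4*(-s)" using m s by simp
      thus ?thesis by (metis dvd_triv_left)
    qed
    show ?thesis using f4 that[of 1 1 0 0 False "t1+t2+t3+t4+s"] m jj by simp
  qed
next
  case False
  hence "odd k2" "odd k3" "odd k4" using p by presburger+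
  with False obtain m1 m2 m3 m4 where m: "k1 = 2*m1+1" "k2 = 2*m2+1" "k3 = 2*m3+1" "k4 = 2*m4+1"
    by (metis oddE)
  obtain t1 t2 t3 t4 where t: "k1^2 = 8*t1 + 1" "k2^2 = 8*t2 + 1" "k3^2 = 8*t3 + 1" "k4^2 = 8*t4 + 1"
    using sq_odd[OF m(1)] sq_odd[OF m(2)] sq_odd[OF m(3)] sq_odd[OF m(4)] by blast
  have jj: "k1^2+k2^2+k3^2+k4^2 = 8*(t1+t2+t3+t4) + (if False then 0 else 4)" using t by simp
  show ?thesis
  proof (cases "even (m1+m2+m3+m4)")
    case True2: True
    then obtain s where s: "m1+m2+m3+m4 = 2*s" by blast
    have f4: "4 dvd ((0+1-k1) + (1-0-k2) + (0+1-k3) + (1-0-k4))"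
    proof -
      have "(0+1-k1) + (1-0-k2) + (0+1-k3) + (1-0-k4) = 4*(-s)" using m s by simp
      thus ?thesis by (metis dvd_triv_left)
    qed
    show ?thesis using f4 that[of 0 1 0 1 False "t1+t2+t3+t4"] m jj by simp
  next
    case False2: False
    then obtain s where s: "m1+m2+m3+m4 = 2*s+1" by (metis oddE)
    have f4: "4 dvd ((0+1-k1) + (1-0-k2) + (1+0-k3) + (0-1-k4))"
    proof -
      have "(0+1-k1) + (1-0-k2) + (1+0-k3) + (0-1-k4) = 4*(-s-1)" using m s by simp
      thus ?thesis by (metis dvd_triv_left)
    qed
    show ?thesis using f4 that[of 0 1 1 0 False "t1+t2+t3+t4"] m jj by simp
  qed
qed

theorem lemma4p6:
  assumes "\<alpha> \<in> dualN" and "qN_is_one \<alpha>"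
  shows "\<exists>r\<in>latN. bil r r = -2 \<and>
           (\<lambda>i. (r i + rho r i) / 2 - \<alpha> i) \<in> latN"
proof -
  have D: "\<And>w. w \<in> latN \<Longrightarrow> bil \<alpha> w \<in> \<int>" using assms(1) unfolding dualN_def by auto
  have z12: "\<forall>i\<ge>12. \<alpha> i = 0" using assms(1) unfolding dualN_def amb_def by auto
  have t0: "\<alpha> 0 \<in> \<int>"
  proof -
    have "bil \<alpha> (\<lambda>i. of_int (if i = 1 then 1 else 0)) \<in> \<int>" by (rule D, rule latN_int) auto
    moreover have "bil \<alpha> (\<lambda>i. of_int (if i = 1 then 1 else 0)) = \<alpha> 0" by (simp add: bil_def s412)
    ultimately show ?thesis by (metis Ints_minus minus_minus)
  qed
  have t1: "\<alpha> 1 \<in> \<int>"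
  proof -
    have "bil \<alpha> (\<lambda>i. of_int (if i = 0 then 1 else 0)) \<in> \<int>" by (rule D, rule latN_int) auto
    moreover have "bil \<alpha> (\<lambda>i. of_int (if i = 0 then 1 else 0)) = \<alpha> 1" by (simp add: bil_def s412)
    ultimately show ?thesis by (metis Ints_minus minus_minus)
  qed
  have t2: "2 * \<alpha> 2 \<in> \<int>"
  proof -
    have "bil \<alpha> (\<lambda>i. of_int (if i = 3 then 1 else 0)) \<in> \<int>" by (rule D, rule latN_int) auto
    moreover have "bil \<alpha> (\<lambda>i. of_int (if i = 3 then 1 else 0)) = 2 * \<alpha> 2" by (simp add: bil_def s412)
    ultimately show ?thesis by (metis Ints_minus minus_minus)
  qed
  have t3: "2 * \<alpha> 3 \<in> \<int>"
  proof -
    have "bil \<alpha> (\<lambda>i. of_int (if i = 2 then 1 else 0)) \<in> \<int>" by (rule D, rule latN_int) auto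
    moreover have "bil \<alpha> (\<lambda>i. of_int (if i = 2 then 1 else 0)) = 2 * \<alpha> 3" by (simp add: bil_def s412)
    ultimately show ?thesis by (metis Ints_minus minus_minus)
  qed
  have t4: "2 * \<alpha> 4 \<in> \<int>"
  proof -
    have "bil \<alpha> (\<lambda>i. of_int (if i = 4 then 2 else 0)) \<in> \<int>" by (rule D, rule latN_int) auto
    moreover have "bil \<alpha> (\<lambda>i. of_int (if i = 4 then 2 else 0)) = -(2 * \<alpha> 4)" by (simp add: bil_def s412)
    ultimately show ?thesis by (metis Ints_minus minus_minus)
  qed
  have t5: "2 * \<alpha> 5 \<in> \<int>"
  proof -
    have "bil \<alpha> (\<lambda>i. of_int (if i = 5 then 2 else 0)) \<in> \<int>" by (rule D, rule latN_int) auto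
    moreover have "bil \<alpha> (\<lambda>i. of_int (if i = 5 then 2 else 0)) = -(2 * \<alpha> 5)" by (simp add: bil_def s412)
    ultimately show ?thesis by (metis Ints_minus minus_minus)
  qed
  have t6: "2 * \<alpha> 6 \<in> \<int>"
  proof -
    have "bil \<alpha> (\<lambda>i. of_int (if i = 6 then 2 else 0)) \<in> \<int>" by (rule D, rule latN_int) auto
    moreover have "bil \<alpha> (\<lambda>i. of_int (if i = 6 then 2 else 0)) = -(2 * \<alpha> 6)" by (simp add: bil_def s412)
    ultimately show ?thesis by (metis Ints_minus minus_minus)
  qed
  have t7: "2 * \<alpha> 7 \<in> \<int>"
  proof -
    have "bil \<alpha> (\<lambda>i. of_int (if i = 7 then 2 else 0)) \<in> \<int>" by (rule D, rule latN_int) auto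
    moreover have "bil \<alpha> (\<lambda>i. of_int (if i = 7 then 2 else 0)) = -(2 * \<alpha> 7)" by (simp add: bil_def s412)
    ultimately show ?thesis by (metis Ints_minus minus_minus)
  qed
  have t8: "2 * \<alpha> 8 \<in> \<int>"
  proof -
    have "bil \<alpha> (\<lambda>i. of_int (if i = 8 then 2 else 0)) \<in> \<int>" by (rule D, rule latN_int) auto
    moreover have "bil \<alpha> (\<lambda>i. of_int (if i = 8 then 2 else 0)) = -(2 * \<alpha> 8)" by (simp add: bil_def s412)
    ultimately show ?thesis by (metis Ints_minus minus_minus)
  qed
  have t9: "2 * \<alpha> 9 \<in> \<int>"
  proof -
    have "bil \<alpha> (\<lambda>i. of_int (if i = 9 then 2 else 0)) \<in> \<int>" by (rule D, rule latN_int) auto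
    moreover have "bil \<alpha> (\<lambda>i. of_int (if i = 9 then 2 else 0)) = -(2 * \<alpha> 9)" by (simp add: bil_def s412)
    ultimately show ?thesis by (metis Ints_minus minus_minus)
  qed
  have t10: "2 * \<alpha> 10 \<in> \<int>"
  proof -
    have "bil \<alpha> (\<lambda>i. of_int (if i = 10 then 2 else 0)) \<in> \<int>" by (rule D, rule latN_int) auto
    moreover have "bil \<alpha> (\<lambda>i. of_int (if i = 10 then 2 else 0)) = -(2 * \<alpha> 10)" by (simp add: bil_def s412)
    ultimately show ?thesis by (metis Ints_minus minus_minus)
  qed
  have t11: "2 * \<alpha> 11 \<in> \<int>"
  proof -
    have "bil \<alpha> (\<lambda>i. of_int (if i = 11 then 2 else 0)) \<in> \<int>" by (rule D, rule latN_int) auto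
    moreover have "bil \<alpha> (\<lambda>i. of_int (if i = 11 then 2 else 0)) = -(2 * \<alpha> 11)" by (simp add: bil_def s412)
    ultimately show ?thesis by (metis Ints_minus minus_minus)
  qed
  have d4_5: "\<alpha> 4 - \<alpha> 5 \<in> \<int>"
  proof -
    have "bil \<alpha> (\<lambda>i. of_int (if i = 4 then 1 else if i = 5 then -1 else 0)) \<in> \<int>" by (rule D, rule latN_int) auto
    moreover have "bil \<alpha> (\<lambda>i. of_int (if i = 4 then 1 else if i = 5 then -1 else 0)) = -(\<alpha> 4 - \<alpha> 5)" by (simp add: bil_def s412)
    ultimately show ?thesis by (metis Ints_minus minus_minus)
  qed
  have d4_6: "\<alpha> 4 - \<alpha> 6 \<in> \<int>"
  proof -
    have "bil \<alpha> (\<lambda>i. of_int (if i = 4 then 1 else if i = 6 then -1 else 0)) \<in> \<int>" by (rule D, rule latN_int) auto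
    moreover have "bil \<alpha> (\<lambda>i. of_int (if i = 4 then 1 else if i = 6 then -1 else 0)) = -(\<alpha> 4 - \<alpha> 6)" by (simp add: bil_def s412)
    ultimately show ?thesis by (metis Ints_minus minus_minus)
  qed
  have d4_7: "\<alpha> 4 - \<alpha> 7 \<in> \<int>"
  proof -
    have "bil \<alpha> (\<lambda>i. of_int (if i = 4 then 1 else if i = 7 then -1 else 0)) \<in> \<int>" by (rule D, rule latN_int) auto
    moreover have "bil \<alpha> (\<lambda>i. of_int (if i = 4 then 1 else if i = 7 then -1 else 0)) = -(\<alpha> 4 - \<alpha> 7)" by (simp add: bil_def s412)
    ultimately show ?thesis by (metis Ints_minus minus_minus)
  qed
  have d8_9: "\<alpha> 8 - \<alpha> 9 \<in> \<int>"
  proof -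
    have "bil \<alpha> (\<lambda>i. of_int (if i = 8 then 1 else if i = 9 then -1 else 0)) \<in> \<int>" by (rule D, rule latN_int) auto
    moreover have "bil \<alpha> (\<lambda>i. of_int (if i = 8 then 1 else if i = 9 then -1 else 0)) = -(\<alpha> 8 - \<alpha> 9)" by (simp add: bil_def s412)
    ultimately show ?thesis by (metis Ints_minus minus_minus)
  qed
  have d8_10: "\<alpha> 8 - \<alpha> 10 \<in> \<int>"
  proof -
    have "bil \<alpha> (\<lambda>i. of_int (if i = 8 then 1 else if i = 10 then -1 else 0)) \<in> \<int>" by (rule D, rule latN_int) auto
    moreover have "bil \<alpha> (\<lambda>i. of_int (if i = 8 then 1 else if i = 10 then -1 else 0)) = -(\<alpha> 8 - \<alpha> 10)" by (simp add: bil_def s412)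
    ultimately show ?thesis by (metis Ints_minus minus_minus)
  qed
  have d8_11: "\<alpha> 8 - \<alpha> 11 \<in> \<int>"
  proof -
    have "bil \<alpha> (\<lambda>i. of_int (if i = 8 then 1 else if i = 11 then -1 else 0)) \<in> \<int>" by (rule D, rule latN_int) auto
    moreover have "bil \<alpha> (\<lambda>i. of_int (if i = 8 then 1 else if i = 11 then -1 else 0)) = -(\<alpha> 8 - \<alpha> 11)" by (simp add: bil_def s412)
    ultimately show ?thesis by (metis Ints_minus minus_minus)
  qed
  obtain a0 where a0: "\<alpha> 0 = of_int a0" using t0 by (metis Ints_cases)
  obtain a1 where a1: "\<alpha> 1 = of_int a1" using t1 by (metis Ints_cases)
  have a1': "\<alpha> (Suc 0) = of_int a1" using a1 by simp
  obtain k2 where ak2: "\<alpha> 2 = of_int k2 / 2"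
  proof -
    obtain k where "2 * \<alpha> 2 = of_int k" using t2 by (metis Ints_cases)
    hence "\<alpha> 2 = of_int k / 2" by simp
    thus ?thesis using that by blast
  qed
  obtain k3 where ak3: "\<alpha> 3 = of_int k3 / 2"
  proof -
    obtain k where "2 * \<alpha> 3 = of_int k" using t3 by (metis Ints_cases)
    hence "\<alpha> 3 = of_int k / 2" by simp
    thus ?thesis using that by blast
  qed
  obtain k4 where ak4: "\<alpha> 4 = of_int k4 / 2"
  proof -
    obtain k where "2 * \<alpha> 4 = of_int k" using t4 by (metis Ints_cases)
    hence "\<alpha> 4 = of_int k / 2" by simp
    thus ?thesis using that by blast
  qed
  obtain k5 where ak5: "\<alpha> 5 = of_int k5 / 2"
  proof -
    obtain k where "2 * \<alpha> 5 = of_int k" using t5 by (metis Ints_cases)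
    hence "\<alpha> 5 = of_int k / 2" by simp
    thus ?thesis using that by blast
  qed
  obtain k6 where ak6: "\<alpha> 6 = of_int k6 / 2"
  proof -
    obtain k where "2 * \<alpha> 6 = of_int k" using t6 by (metis Ints_cases)
    hence "\<alpha> 6 = of_int k / 2" by simp
    thus ?thesis using that by blast
  qed
  obtain k7 where ak7: "\<alpha> 7 = of_int k7 / 2"
  proof -
    obtain k where "2 * \<alpha> 7 = of_int k" using t7 by (metis Ints_cases)
    hence "\<alpha> 7 = of_int k / 2" by simp
    thus ?thesis using that by blast
  qed
  obtain k8 where ak8: "\<alpha> 8 = of_int k8 / 2"
  proof -
    obtain k where "2 * \<alpha> 8 = of_int k" using t8 by (metis Ints_cases)
    hence "\<alpha> 8 = of_int k / 2" by simp
    thus ?thesis using that by blast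
  qed
  obtain k9 where ak9: "\<alpha> 9 = of_int k9 / 2"
  proof -
    obtain k where "2 * \<alpha> 9 = of_int k" using t9 by (metis Ints_cases)
    hence "\<alpha> 9 = of_int k / 2" by simp
    thus ?thesis using that by blast
  qed
  obtain k10 where ak10: "\<alpha> 10 = of_int k10 / 2"
  proof -
    obtain k where "2 * \<alpha> 10 = of_int k" using t10 by (metis Ints_cases)
    hence "\<alpha> 10 = of_int k / 2" by simp
    thus ?thesis using that by blast
  qed
  obtain k11 where ak11: "\<alpha> 11 = of_int k11 / 2"
  proof -
    obtain k where "2 * \<alpha> 11 = of_int k" using t11 by (metis Ints_cases)
    hence "\<alpha> 11 = of_int k / 2" by simp
    thus ?thesis using that by blast
  qed
  have e4_5: "even (k4 - k5)"
  proof -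
    have "(of_int (k4 - k5) :: rat) / 2 = \<alpha> 4 - \<alpha> 5" using ak4 ak5 by (simp add: field_simps)
    thus ?thesis using d4_5 half_Ints by metis
  qed
  have e4_6: "even (k4 - k6)"
  proof -
    have "(of_int (k4 - k6) :: rat) / 2 = \<alpha> 4 - \<alpha> 6" using ak4 ak6 by (simp add: field_simps)
    thus ?thesis using d4_6 half_Ints by metis
  qed
  have e4_7: "even (k4 - k7)"
  proof -
    have "(of_int (k4 - k7) :: rat) / 2 = \<alpha> 4 - \<alpha> 7" using ak4 ak7 by (simp add: field_simps)
    thus ?thesis using d4_7 half_Ints by metis
  qed
  have e8_9: "even (k8 - k9)"
  proof -
    have "(of_int (k8 - k9) :: rat) / 2 = \<alpha> 8 - \<alpha> 9" using ak8 ak9 by (simp add: field_simps)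
    thus ?thesis using d8_9 half_Ints by metis
  qed
  have e8_10: "even (k8 - k10)"
  proof -
    have "(of_int (k8 - k10) :: rat) / 2 = \<alpha> 8 - \<alpha> 10" using ak8 ak10 by (simp add: field_simps)
    thus ?thesis using d8_10 half_Ints by metis
  qed
  have e8_11: "even (k8 - k11)"
  proof -
    have "(of_int (k8 - k11) :: rat) / 2 = \<alpha> 8 - \<alpha> 11" using ak8 ak11 by (simp add: field_simps)
    thus ?thesis using d8_11 half_Ints by metis
  qed
  obtain x1 x2 x3 x4 zx jx where X:
    "even (x1+x2-k4)" "even (x2-x1-k5)" "even (x3+x4-k6)" "even (x4-x3-k7)"
    "4 dvd ((x1+x2-k4) + (x2-x1-k5) + (x3+x4-k6) + (x4-x3-k7))"
    "even (x1+x2+x3+x4)"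
    "x1^2+x2^2+x3^2+x4^2 = (if zx then 0 else 2)"
    "k4^2+k5^2+k6^2+k7^2 = 8*jx + (if zx then 0 else 4)"
    by (rule d4_choice[OF e4_5 e4_6 e4_7])
  obtain y1 y2 y3 y4 zy jy where Y:
    "even (y1+y2-k8)" "even (y2-y1-k9)" "even (y3+y4-k10)" "even (y4-y3-k11)"
    "4 dvd ((y1+y2-k8) + (y2-y1-k9) + (y3+y4-k10) + (y4-y3-k11))"
    "even (y1+y2+y3+y4)"
    "y1^2+y2^2+y3^2+y4^2 = (if zy then 0 else 2)"
    "k8^2+k9^2+k10^2+k11^2 = 8*jy + (if zy then 0 else 4)"
    by (rule d4_choice[OF e8_9 e8_10 e8_11])
  define cx :: int where "cx = (if zx then 0 else 1)"
  define cy :: int where "cy = (if zy then 0 else 1)"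
  have cx01: "cx = 0 \<or> cx = 1" and cy01: "cy = 0 \<or> cy = 1" unfolding cx_def cy_def by auto
  have X7: "x1*x1+x2*x2+x3*x3+x4*x4 = 2*cx" using X(7) unfolding cx_def by (simp add: power2_eq_square)
  have X8: "k4*k4+k5*k5+k6*k6+k7*k7 = 8*jx + 4*cx" using X(8) unfolding cx_def by (simp add: power2_eq_square)
  have Y7: "y1*y1+y2*y2+y3*y3+y4*y4 = 2*cy" using Y(7) unfolding cy_def by (simp add: power2_eq_square)
  have Y8: "k8*k8+k9*k9+k10*k10+k11*k11 = 8*jy + 4*cy" using Y(8) unfolding cy_def by (simp add: power2_eq_square)
  have B4: "4 * bil \<alpha> \<alpha> = of_int (8*a0*a1 + 4*k2*k3 - (k4*k4+k5*k5+k6*k6+k7*k7) - (k8*k8+k9*k9+k10*k10+k11*k11))"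
    by (simp add: bil_def s412 a0 a1 a1' ak2 ak3 ak4 ak5 ak6 ak7 ak8 ak9 ak10 ak11 field_simps)
  have B: "bil \<alpha> \<alpha> = of_int (2*(a0*a1 - jx - jy) + k2*k3 - cx - cy)"
  proof -
    have "4 * bil \<alpha> \<alpha> = of_int (4 * (2*(a0*a1 - jx - jy) + k2*k3 - cx - cy))"
      unfolding B4 X8 Y8 by (simp add: algebra_simps)
    thus ?thesis by simp
  qed
  have Q: "even (k2*k3 - cx - cy - 1)"
  proof -
    have "(bil \<alpha> \<alpha> - 1) / 2 \<in> \<int>" using assms(2) unfolding qN_is_one_def .
    moreover have "(bil \<alpha> \<alpha> - 1) / 2 = (of_int (2*(a0*a1 - jx - jy) + (k2*k3 - cx - cy - 1)) :: rat) / 2"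
      unfolding B by simp
    ultimately have "even (2*(a0*a1 - jx - jy) + (k2*k3 - cx - cy - 1))" using half_Ints by metis
    thus ?thesis by simp
  qed
  obtain a b :: int where ab: "even (a + k2)" "even (b + k3)" "a*b = cx + cy - 1"
  proof (cases "odd k2 \<and> odd k3")
    case True
    hence "odd (k2*k3)" by simp
    moreover have "\<And>P::int. odd P \<Longrightarrow> even (P - cx - cy - 1) \<Longrightarrow> cx = cy" using cx01 cy01 by presburger
    ultimately have "cx = cy" using Q by blast
    show ?thesis
    proof (cases "cx = 0")
      case True2: True
      show ?thesis by (rule that[of 1 "-1"]) (use True True2 \<open>cx = cy\<close> in presburger)+
    next
      case False2: False
      show ?thesis by (rule that[of 1 1]) (use True False2 \<open>cx = cy\<close> cx01 in presburger)+
    qed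
  next
    case False
    hence "even (k2*k3)" by auto
    moreover have "\<And>P::int. even P \<Longrightarrow> even (P - cx - cy - 1) \<Longrightarrow> cx + cy = 1" using cx01 cy01 by presburger
    ultimately have c1: "cx + cy = 1" using Q by blast
    have pr: "(k2 mod 2) * (k3 mod 2) = 0" using False by auto
    show ?thesis
    proof (rule that[of "k2 mod 2" "k3 mod 2"])
      show "even (k2 mod 2 + k2)" by presburger
      show "even (k3 mod 2 + k3)" by presburger
      show "k2 mod 2 * (k3 mod 2) = cx + cy - 1" using pr c1 by simp
    qed
  qed
  define rv :: "nat \<Rightarrow> int" where "rv = (\<lambda>i. if i = 0 then a else if i = 1 then b
     else if i = 4 then x1 else if i = 5 then x2 else if i = 6 then x3 else if i = 7 then x4
     else if i = 8 then y1 else if i = 9 then y2 else if i = 10 then y3 else if i = 11 then y4 else 0)"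
  define r :: "nat \<Rightarrow> rat" where "r = (\<lambda>i. of_int (rv i))"
  have rN: "r \<in> latN" unfolding r_def by (rule latN_int) (use X(6) Y(6) in \<open>auto simp: rv_def\<close>)
  have rr: "bil r r = -2"
  proof -
    have "bil r r = of_int (2*(a*b) - (x1*x1+x2*x2+x3*x3+x4*x4) - (y1*y1+y2*y2+y3*y3+y4*y4))"
      unfolding r_def bil_int s412 by (simp add: rv_def algebra_simps)
    also have "\<dots> = -2" unfolding X7 Y7 ab(3) by simp
    finally show ?thesis .
  qed
  define dd :: "nat \<Rightarrow> int" where "dd = (\<lambda>i. if i = 0 then -2*a0 else if i = 1 then 2*b - 2*a1
     else if i = 2 then -a - k2 else if i = 3 then -b - k3
     else if i = 4 then x1+x2-k4 else if i = 5 then x2-x1-k5 else if i = 6 then x3+x4-k6 else if i = 7 then x4-x3-k7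
     else if i = 8 then y1+y2-k8 else if i = 9 then y2-y1-k9 else if i = 10 then y3+y4-k10 else if i = 11 then y4-y3-k11 else 0)"
  have lt: "\<forall>i<12. (r i + rho r i) / 2 - \<alpha> i = (of_int (dd i)) / 2"
    unfolding all12 by (simp add: r_def rv_def dd_def rho_def a0 a1 a1' ak2 ak3 ak4 ak5 ak6 ak7 ak8 ak9 ak10 ak11 field_simps)
  have ge: "\<forall>i\<ge>12. (r i + rho r i) / 2 - \<alpha> i = (of_int (dd i)) / 2"
    using z12 by (simp add: r_def rv_def dd_def rho_def)
  have eqd: "(\<lambda>i. (r i + rho r i) / 2 - \<alpha> i) = (\<lambda>i. (of_int (dd i)) / 2)"
  proof
    fix i show "(r i + rho r i) / 2 - \<alpha> i = (of_int (dd i)) / 2"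
      using lt ge by (cases "i < 12") auto
  qed
  have dN: "(\<lambda>i. (r i + rho r i) / 2 - \<alpha> i) \<in> latN"
    unfolding eqd
  proof (rule latN_half)
    show "\<forall>i\<ge>12. dd i = 0" by (simp add: dd_def)
    have "even (-a - k2)" "even (-b - k3)" using ab(1,2) by presburger+
    moreover have "even (2*b - 2*a1)" "even (-2*a0)" by simp_all
    ultimately show "\<forall>i<12. even (dd i)" unfolding all12 using X(1-4) Y(1-4) by (simp add: dd_def)
    show "4 dvd (dd 4 + dd 5 + dd 6 + dd 7)" using X(5) by (simp add: dd_def)
    show "4 dvd (dd 8 + dd 9 + dd 10 + dd 11)" using Y(5) by (simp add: dd_def)
  qed
  show ?thesis using rN rr dN by blast
qed

end
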